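(* Let $H$ be a reasonable Hintikka tree with induced measure $\beta$, and for a sentence $\varphi$ of depth $d$ let $\boldsymbol{\varphi} = \sum_{\delta^{(d)} \in \mathrm{dnf}(\varphi)} \chi_{[\delta^{(0)}\cdots\delta^{(d)}]} \in L^2(\Psi^\omega, \beta)$. Then for all sentences $\varphi, \varphi_1, \varphi_2$: (1) $\langle \boldsymbol{\varphi}, \boldsymbol{\lnot\varphi} \rangle = 0$; (2) $\boldsymbol{\varphi_1 \lor \varphi_2} = \boldsymbol{\varphi_1} \oplus \boldsymbol{\varphi_2}$, where $(f \oplus g)(x) = \max(f(x), g(x))$; (3) if $\langle \boldsymbol{\varphi_1}, \boldsymbol{\varphi_2} \rangle = 0$ then $\varphi_1 \models \lnot \varphi_2$.
   Context: $L$ is a first-order language without equality with finitely many predicate symbols and no function or constant symbols. For $d \in \mathbb{N}$, $\Delta^{(d)}$ is the finite set of Hintikka constituents of depth $d$ with no free variables ($\Delta^{(0)} = \{\top\}$); distinct constituents of the same depth are mutually exclusive, every sentence $\varphi$ of quantifier depth $d$ is logically equivalent to the disjunction of a set $\mathrm{dnf}(\varphi) \subseteq \Delta^{(d)}$ (its Hintikka distributive normal form), and $\mathrm{expand}(e,\delta^{(d)})\subseteq\Delta^{(d+e)}$ denotes the expansions of $\delta^{(d)}$, whose disjunction is equivalent to $\delta^{(d)}$. A fixed decidable criterion of trivial inconsistency for constituents is given; trivially inconsistent constituents are inconsistent (unsatisfiable). Refinement tree: on $\Delta = \bigcup_d \Delta^{(d)}$ put an edge from each $\delta^{(d)}$ to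 each member of $\mathrm{expand}(1,\delta^{(d)})$, keeping a constituent lying in several depth-$d$ expansions as child of only one of them. A Hintikka tree is a function $H: \Delta \to [0,1]$ with $H(\delta^{(0)}) = 1$ and $H(\delta) = \sum_{\delta' \text{ child of } \delta} H(\delta')$; it is reasonable if $H(\delta) > 0$ for every constituent $\delta$ that is not trivially inconsistent. $\Psi^\omega$ is the set of infinite root paths in the refinement tree with the topology generated by cylinders $[\delta^{(0)}\cdots\delta^{(d)}]$ (paths with that prefix; here $\delta^{(0)}\cdots\delta^{(d)}$ is the root path to $\delta^{(d)}$), $\beta$ is the unique Borel probability measure with $\beta([\delta^{(0)}\cdots\delta^{(d)}]) = H(\delta^{(d)})$, $\chi_X$ is the indicator of $X$, and $L^2(\Psi^\omega,\beta)$ has inner product $\langle f, g\rangle = \int f g\, d\beta$. *)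

theory Defs
  imports "HOL-Probability.Probability" "HOL-Library.FSet"
begin

section \<open>First-order language without equality, no function/constant symbols\<close>

text \<open>The signature is a list sig of arities: predicate symbol p (p < length sig)
  has arity sig ! p.  Variables are natural numbers.\<close>

datatype fm = FTrue | Atom nat "nat list" | Neg fm | Disj fm fm | Conj fm fm
  | Ex nat fm | All nat fm

primrec wf :: "nat list \<Rightarrow> fm \<Rightarrow> bool" where
  "wf sig FTrue = True"
| "wf sig (Atom p xs) = (p < length sig \<and> length xs = sig ! p)"
| "wf sig (Neg f) = wf sig f"
| "wf sig (Disj f g) = (wf sig f \<and> wf sig g)"
| "wf sig (Conj f g) = (wf sig f \<and> wf sig g)"
| "wf sig (Ex v f) = wf sig f"
| "wf sig (All v f) = wf sig f"

primrec fv :: "fm \<Rightarrow> nat set" where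
  "fv FTrue = {}"
| "fv (Atom p xs) = set xs"
| "fv (Neg f) = fv f"
| "fv (Disj f g) = fv f \<union> fv g"
| "fv (Conj f g) = fv f \<union> fv g"
| "fv (Ex v f) = fv f - {v}"
| "fv (All v f) = fv f - {v}"

definition sentence :: "nat list \<Rightarrow> fm \<Rightarrow> bool" where
  "sentence sig f \<longleftrightarrow> wf sig f \<and> fv f = {}"

primrec qd :: "fm \<Rightarrow> nat" where
  "qd FTrue = 0"
| "qd (Atom p xs) = 0"
| "qd (Neg f) = qd f"
| "qd (Disj f g) = max (qd f) (qd g)"
| "qd (Conj f g) = max (qd f) (qd g)"
| "qd (Ex v f) = Suc (qd f)"
| "qd (All v f) = Suc (qd f)"

text \<open>Tarskian semantics: a structure is a (nonempty) domain D with an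
  interpretation I of the predicate symbols; v is a variable assignment into D.\<close>
primrec sat :: "'a set \<Rightarrow> (nat \<Rightarrow> 'a list \<Rightarrow> bool) \<Rightarrow> (nat \<Rightarrow> 'a) \<Rightarrow> fm \<Rightarrow> bool" where
  "sat D I v FTrue = True"
| "sat D I v (Atom p xs) = I p (map v xs)"
| "sat D I v (Neg f) = (\<not> sat D I v f)"
| "sat D I v (Disj f g) = (sat D I v f \<or> sat D I v g)"
| "sat D I v (Conj f g) = (sat D I v f \<and> sat D I v g)"
| "sat D I v (Ex x f) = (\<exists>a\<in>D. sat D I (v(x := a)) f)"
| "sat D I v (All x f) = (\<forall>a\<in>D. sat D I (v(x := a)) f)"

section \<open>Hintikka constituents\<close>

text \<open>Atoms that contain the variable k and otherwise only variables among 1..k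
  (the atomic part of an attributive constituent with variables x1..xk).\<close>
definition newatoms :: "nat list \<Rightarrow> nat \<Rightarrow> (nat \<times> nat list) list" where
  "newatoms sig k = concat (map (\<lambda>p. map (\<lambda>xs. (p, xs))
       (filter (\<lambda>xs. k \<in> set xs) (List.n_lists (sig ! p) [1..<Suc k]))) [0..<length sig])"

definition atomic_conj :: "nat list \<Rightarrow> nat \<Rightarrow> (nat \<times> nat list) set \<Rightarrow> fm" where
  "atomic_conj sig k A = foldr Conj
      (map (\<lambda>a. if a \<in> A then Atom (fst a) (snd a) else Neg (Atom (fst a) (snd a)))
           (newatoms sig k)) FTrue"

definition conj_set :: "fm set \<Rightarrow> fm" where
  "conj_set X = foldr Conj (SOME xs. set xs = X \<and> distinct xs) FTrue"

definition disj_set :: "fm set \<Rightarrow> fm" where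
  "disj_set X = foldr Disj (SOME xs. set xs = X \<and> distinct xs) (Neg FTrue)"

text \<open>Constituents as trees: the set of positive (new) atoms at this level and
  (for non-leaves) the finite set of attributive constituents one level deeper.\<close>
datatype cst = Leaf "(nat \<times> nat list) set" | Node "(nat \<times> nat list) set" "cst fset"

primrec catoms :: "cst \<Rightarrow> (nat \<times> nat list) set" where
  "catoms (Leaf A) = A"
| "catoms (Node A S) = A"

primrec children :: "cst \<Rightarrow> cst fset" where
  "children (Leaf A) = {||}"
| "children (Node A S) = S"

primrec to_fm :: "nat list \<Rightarrow> cst \<Rightarrow> nat \<Rightarrow> fm" where
  "to_fm sig (Leaf A) k = atomic_conj sig k A"
| "to_fm sig (Node A S) k = Conj (atomic_conj sig k A)
     (Conj (conj_set (fset (fimage (\<lambda>c. Ex (Suc k) (to_fm sig c (Suc k))) S)))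
           (All (Suc k) (disj_set (fset (fimage (\<lambda>c. to_fm sig c (Suc k)) S)))))"

fun AC :: "nat list \<Rightarrow> nat \<Rightarrow> nat \<Rightarrow> cst set" where
  "AC sig k 0 = {Leaf A | A. A \<subseteq> set (newatoms sig k)}"
| "AC sig k (Suc e) = {Node A S | A S. A \<subseteq> set (newatoms sig k) \<and> fset S \<subseteq> AC sig (Suc k) e}"

text \<open>Delta sig d: constituents of depth d without free variables (as trees; the
  corresponding sentence is to_fm sig \<delta> 0).  Delta sig 0 = {Leaf {}}, whose formula is FTrue.\<close>
fun Delta :: "nat list \<Rightarrow> nat \<Rightarrow> cst set" where
  "Delta sig 0 = {Leaf {}}"
| "Delta sig (Suc e) = {Node {} S | S. fset S \<subseteq> AC sig 1 e}"

abbreviation root :: cst where "root \<equiv> Leaf {}"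

primrec trunc :: "cst \<Rightarrow> nat \<Rightarrow> cst" where
  "trunc (Leaf A) n = Leaf A"
| "trunc (Node A S) n = (case n of 0 \<Rightarrow> Leaf A | Suc m \<Rightarrow> Node A (fimage (\<lambda>c. trunc c m) S))"

definition expand :: "nat list \<Rightarrow> nat \<Rightarrow> nat \<Rightarrow> cst \<Rightarrow> cst set" where
  "expand sig e d \<delta> = {\<delta>' \<in> Delta sig (d + e). trunc \<delta>' d = \<delta>}"

section \<open>Distributive normal form\<close>

text \<open>Truth of a formula in a constituent: cs = [root, \<gamma>1, ..., \<gamma>k] is a branch of a
  constituent, \<rho> assigns to each variable the level at which it was introduced.\<close>
primrec tv :: "cst list \<Rightarrow> (nat \<Rightarrow> nat) \<Rightarrow> fm \<Rightarrow> bool" where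
  "tv cs \<rho> FTrue = True"
| "tv cs \<rho> (Atom p xs) = ((p, map \<rho> xs) \<in> catoms (cs ! Max (set (map \<rho> xs))))"
| "tv cs \<rho> (Neg f) = (\<not> tv cs \<rho> f)"
| "tv cs \<rho> (Disj f g) = (tv cs \<rho> f \<or> tv cs \<rho> g)"
| "tv cs \<rho> (Conj f g) = (tv cs \<rho> f \<and> tv cs \<rho> g)"
| "tv cs \<rho> (Ex v f) = (\<exists>c\<in>fset (children (last cs)). tv (cs @ [c]) (\<rho>(v := length cs)) f)"
| "tv cs \<rho> (All v f) = (\<forall>c\<in>fset (children (last cs)). tv (cs @ [c]) (\<rho>(v := length cs)) f)"

definition dnf :: "nat list \<Rightarrow> fm \<Rightarrow> cst set" where
  "dnf sig f = {\<delta> \<in> Delta sig (qd f). tv [\<delta>] (\<lambda>_. 0) f}"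

section \<open>Refinement tree, paths, cylinders\<close>

text \<open>Infinite root paths of the refinement tree (f n is the depth-n node).\<close>
definition Psi :: "nat list \<Rightarrow> (nat \<Rightarrow> cst) set" where
  "Psi sig = {f. f 0 = root \<and> (\<forall>n. f (Suc n) \<in> expand sig 1 n (f n))}"

definition cyl :: "nat list \<Rightarrow> nat \<Rightarrow> cst \<Rightarrow> (nat \<Rightarrow> cst) set" where
  "cyl sig d \<delta> = {f \<in> Psi sig. f d = \<delta>}"

definition cyls :: "nat list \<Rightarrow> (nat \<Rightarrow> cst) set set" where
  "cyls sig = {cyl sig d \<delta> | d \<delta>. \<delta> \<in> Delta sig d}"

definition Psi_topology :: "nat list \<Rightarrow> (nat \<Rightarrow> cst) topology" where
  "Psi_topology sig = subtopology (topology_generated_by (cyls sig)) (Psi sig)"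

definition Psi_borel :: "nat list \<Rightarrow> (nat \<Rightarrow> cst) set set" where
  "Psi_borel sig = sigma_sets (Psi sig) {U. openin (Psi_topology sig) U}"

section \<open>Hintikka trees\<close>

definition hintikka_tree :: "nat list \<Rightarrow> (nat \<Rightarrow> cst \<Rightarrow> real) \<Rightarrow> bool" where
  "hintikka_tree sig H \<longleftrightarrow>
     (\<forall>d. \<forall>\<delta>\<in>Delta sig d. 0 \<le> H d \<delta> \<and> H d \<delta> \<le> 1) \<and>
     H 0 root = 1 \<and>
     (\<forall>d. \<forall>\<delta>\<in>Delta sig d. H d \<delta> = (\<Sum>\<delta>'\<in>expand sig 1 d \<delta>. H (Suc d) \<delta>'))"

definition reasonable :: "nat list \<Rightarrow> (cst \<Rightarrow> bool) \<Rightarrow> (nat \<Rightarrow> cst \<Rightarrow> real) \<Rightarrow> bool" where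
  "reasonable sig triv H \<longleftrightarrow> hintikka_tree sig H \<and>
     (\<forall>d. \<forall>\<delta>\<in>Delta sig d. \<not> triv \<delta> \<longrightarrow> H d \<delta> > 0)"

definition induced_measure :: "nat list \<Rightarrow> (nat \<Rightarrow> cst \<Rightarrow> real) \<Rightarrow> (nat \<Rightarrow> cst) measure \<Rightarrow> bool" where
  "induced_measure sig H \<beta> \<longleftrightarrow> prob_space \<beta> \<and> space \<beta> = Psi sig \<and> sets \<beta> = Psi_borel sig \<and>
     (\<forall>d. \<forall>\<delta>\<in>Delta sig d. measure \<beta> (cyl sig d \<delta>) = H d \<delta>)"

definition bold :: "nat list \<Rightarrow> fm \<Rightarrow> (nat \<Rightarrow> cst) \<Rightarrow> real" where
  "bold sig f = (\<lambda>x. \<Sum>\<delta>\<in>dnf sig f. indicator (cyl sig (qd f) \<delta>) x)"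

definition inner_L2 :: "(nat \<Rightarrow> cst) measure \<Rightarrow> ((nat \<Rightarrow> cst) \<Rightarrow> real) \<Rightarrow> ((nat \<Rightarrow> cst) \<Rightarrow> real) \<Rightarrow> real" where
  "inner_L2 \<beta> f g = integral\<^sup>L \<beta> (\<lambda>x. f x * g x)"

end

theory Submission
  imports Defs
begin


lemma mem_newatoms:
  "a \<in> set (newatoms sig k) \<longleftrightarrow> fst a < length sig \<and> length (snd a) = sig ! fst a
     \<and> set (snd a) \<subseteq> {1..k} \<and> k \<in> set (snd a)"
proof (cases a)
  case (Pair p xs)
  show ?thesis unfolding Pair newatoms_def
    by (auto simp: set_n_lists image_iff subset_iff)
qed

lemma newatoms0: "set (newatoms sig 0) = {}"
proof -
  have "a \<notin> set (newatoms sig 0)" for a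
    unfolding mem_newatoms by auto
  then show ?thesis by (meson equals0I)
qed

lemma finite_fsets: "finite X \<Longrightarrow> finite {S. fset S \<subseteq> X}"
proof -
  assume f: "finite X"
  have "{S. fset S \<subseteq> X} \<subseteq> Abs_fset ` Pow X"
  proof
    fix S assume "S \<in> {S. fset S \<subseteq> X}"
    then show "S \<in> Abs_fset ` Pow X" by (intro image_eqI[of _ _ "fset S"]) (auto simp: fset_inverse)
  qed
  moreover have "finite (Abs_fset ` Pow X)" using f by simp
  ultimately show ?thesis by (rule finite_subset)
qed

lemma finite_AC: "finite (AC sig k e)"
proof (induction e arbitrary: k)
  case 0
  have "AC sig k 0 = Leaf ` Pow (set (newatoms sig k))" by auto
  then show ?case by simp
next
  case (Suc e)
  have "AC sig k (Suc e) = (\<lambda>(A,S). Node A S) ` (Pow (set (newatoms sig k)) \<times> {S. fset S \<subseteq> AC sig (Suc k) e})"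
    by auto
  then show ?case using finite_fsets[OF Suc.IH] by simp
qed

lemma finite_Delta: "finite (Delta sig d)"
proof (cases d)
  case 0 then show ?thesis by simp
next
  case (Suc e)
  have "Delta sig (Suc e) = (\<lambda>S. Node {} S) ` {S. fset S \<subseteq> AC sig 1 e}" by auto
  then show ?thesis using Suc finite_fsets[OF finite_AC] by simp
qed

lemma finite_dnf: "finite (dnf sig f)"
  unfolding dnf_def using finite_Delta by simp

lemma trunc_trunc: "trunc (trunc c n) m = trunc c (min n m)"
proof (induction n arbitrary: c m)
  case 0
  then show ?case by (cases c) auto
next
  case (Suc n)
  then show ?case
  proof (cases c)
    case (Leaf A) then show ?thesis by simp
  next
    case (Node A S)
    then show ?thesis
      by (cases m) (auto simp: Suc.IH fset.map_comp o_def)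
  qed
qed

lemma trunc_AC: "c \<in> AC sig k e \<Longrightarrow> trunc c e = c"
proof (induction e arbitrary: k c)
  case 0 then show ?case by auto
next
  case (Suc e)
  then obtain A S where c: "c = Node A S" and S: "fset S \<subseteq> AC sig (Suc k) e" by auto
  have "fimage (\<lambda>c. trunc c e) S = S"
  proof -
    have "fimage (\<lambda>c. trunc c e) S = fimage id S"
      by (rule fset.map_cong0) (use S Suc.IH in auto)
    then show ?thesis by simp
  qed
  then show ?case using c by simp
qed

lemma trunc_Delta: "\<delta> \<in> Delta sig d \<Longrightarrow> trunc \<delta> d = \<delta>"
  by (cases d) (auto intro: trunc_AC)

lemma Psi_Delta: "x \<in> Psi sig \<Longrightarrow> x n \<in> Delta sig n"
  by (cases n) (auto simp: Psi_def expand_def)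

lemma Psi_trunc: "x \<in> Psi sig \<Longrightarrow> m \<le> n \<Longrightarrow> x m = trunc (x n) m"
proof (induction n)
  case 0 then show ?case using trunc_Delta[OF Psi_Delta[OF 0(1)]] by simp
next
  case (Suc n)
  show ?case
  proof (cases "m = Suc n")
    case True then show ?thesis using trunc_Delta[OF Psi_Delta[OF Suc(2)]] by simp
  next
    case False
    then have "x m = trunc (x n) m" using Suc by simp
    moreover have "x n = trunc (x (Suc n)) n" using Suc(2) by (auto simp: Psi_def expand_def)
    ultimately show ?thesis using False Suc(3) by (simp add: trunc_trunc)
  qed
qed



lemma catoms_trunc: "catoms (trunc c n) = catoms c"
  by (cases c; cases n) auto

lemma children_trunc: "children (trunc c (Suc m)) = fimage (\<lambda>c. trunc c m) (children c)"
  by (cases c) auto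

lemma catoms_app:
  assumes "length cs = length cs'" "\<forall>i. catoms (cs!i) = catoms (cs'!i)" "catoms c = catoms c'"
  shows "catoms ((cs@[c])!i) = catoms ((cs'@[c'])!i)"
  using assms by (cases "i - length cs") (auto simp: nth_append)

lemma tv_trunc:
  "cs \<noteq> [] \<Longrightarrow> length cs' = length cs \<Longrightarrow> (\<forall>i. catoms (cs!i) = catoms (cs'!i)) \<Longrightarrow>
   last cs' = trunc (last cs) n \<Longrightarrow> qd \<phi> \<le> n \<Longrightarrow> tv cs \<rho> \<phi> = tv cs' \<rho> \<phi>"
proof (induction \<phi> arbitrary: cs cs' \<rho> n)
  case (Ex v f)
  then obtain m where n: "n = Suc m" and qm: "qd f \<le> m" by (cases n) auto
  have ch: "fset (children (last cs')) = (\<lambda>c. trunc c m) ` fset (children (last cs))"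
    using Ex.prems(4) n by (simp add: children_trunc)
  have "tv (cs @ [c]) \<rho>' f = tv (cs' @ [trunc c m]) \<rho>' f" for c \<rho>'
    apply (rule Ex.IH)
    using Ex.prems qm catoms_app[of cs cs' c "trunc c m"] by (auto simp: catoms_trunc)
  then show ?case using ch Ex.prems(2) by auto
next
  case (All v f)
  then obtain m where n: "n = Suc m" and qm: "qd f \<le> m" by (cases n) auto
  have ch: "fset (children (last cs')) = (\<lambda>c. trunc c m) ` fset (children (last cs))"
    using All.prems(4) n by (simp add: children_trunc)
  have "tv (cs @ [c]) \<rho>' f = tv (cs' @ [trunc c m]) \<rho>' f" for c \<rho>'
    apply (rule All.IH)
    using All.prems qm catoms_app[of cs cs' c "trunc c m"] by (auto simp: catoms_trunc)
  then show ?case using ch All.prems(2) by auto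
next
  case (Disj f g) then show ?case by (metis max.bounded_iff qd.simps(4) tv.simps(4))
next
  case (Conj f g) then show ?case by (metis max.bounded_iff qd.simps(5) tv.simps(5))
qed auto

definition atset :: "nat list \<Rightarrow> (nat \<Rightarrow> 'a list \<Rightarrow> bool) \<Rightarrow> nat \<Rightarrow> (nat \<Rightarrow> 'a) \<Rightarrow> (nat \<times> nat list) set" where
  "atset sig I k w = {a \<in> set (newatoms sig k). I (fst a) (map w (snd a))}"

primrec tp :: "nat list \<Rightarrow> 'a set \<Rightarrow> (nat \<Rightarrow> 'a list \<Rightarrow> bool) \<Rightarrow> nat \<Rightarrow> nat \<Rightarrow> (nat \<Rightarrow> 'a) \<Rightarrow> cst" where
  "tp sig D I 0 k w = Leaf (atset sig I k w)"
| "tp sig D I (Suc e) k w = Node (atset sig I k w)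
     (Abs_fset ((\<lambda>a. tp sig D I e (Suc k) (w(Suc k := a))) ` D))"

lemma tp_AC: "tp sig D I e k w \<in> AC sig k e"
proof (induction e arbitrary: k w)
  case 0 then show ?case by (auto simp: atset_def)
next
  case (Suc e)
  let ?X = "(\<lambda>a. tp sig D I e (Suc k) (w(Suc k := a))) ` D"
  have X: "?X \<subseteq> AC sig (Suc k) e" using Suc by auto
  then have "finite ?X" using finite_AC finite_subset by blast
  then have "fset (Abs_fset ?X) = ?X" by (simp add: Abs_fset_inverse)
  then show ?case using X by (auto simp: atset_def)
qed

lemma fset_children_tp:
  "fset (children (tp sig D I (Suc e) k w)) = (\<lambda>a. tp sig D I e (Suc k) (w(Suc k := a))) ` D"
proof -
  let ?X = "(\<lambda>a. tp sig D I e (Suc k) (w(Suc k := a))) ` D"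
  have X: "?X \<subseteq> AC sig (Suc k) e" using tp_AC by auto
  then have "finite ?X" using finite_AC finite_subset by blast
  then show ?thesis by (simp add: Abs_fset_inverse)
qed

lemma catoms_tp: "catoms (tp sig D I e k w) = atset sig I k w"
  by (cases e) auto

lemma atset_upd: "j < m \<Longrightarrow> atset sig I j (w(m := a)) = atset sig I j w"
proof -
  assume jm: "j < m"
  have *: "map (w(m := a)) (snd x) = map w (snd x)" if "x \<in> set (newatoms sig j)" for x
  proof -
    have "set (snd x) \<subseteq> {1..j}" using that by (simp add: mem_newatoms)
    then show ?thesis using jm by (auto intro!: map_cong)
  qed
  show ?thesis unfolding atset_def by (rule Collect_cong) (metis (mono_tags) *)
qed

lemma tv_sat:
  assumes arity: "\<forall>a\<in>set sig. 1 \<le> a"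
  shows "wf sig \<phi> \<Longrightarrow> qd \<phi> \<le> e \<Longrightarrow> cs \<noteq> [] \<Longrightarrow> (\<forall>j<length cs. catoms (cs!j) = atset sig I j w) \<Longrightarrow>
    last cs = tp sig D I e (length cs - 1) w \<Longrightarrow> (\<forall>y. \<rho> y < length cs) \<Longrightarrow> (\<forall>y\<in>fv \<phi>. 1 \<le> \<rho> y) \<Longrightarrow>
    tv cs \<rho> \<phi> = sat D I (w \<circ> \<rho>) \<phi>"
proof (induction \<phi> arbitrary: cs \<rho> w e)
  case (Atom p xs)
  have p: "p < length sig" "length xs = sig ! p" using Atom by auto
  then have "sig ! p \<ge> 1" using arity by auto
  then have ne: "xs \<noteq> []" using p by auto
  define j where "j = Max (set (map \<rho> xs))"
  have jin: "j \<in> set (map \<rho> xs)" unfolding j_def using ne by (intro Max_in) auto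
  then have jl: "j < length cs" using Atom by auto
  have "\<forall>x\<in>set xs. 1 \<le> \<rho> x \<and> \<rho> x \<le> j" unfolding j_def using Atom.prems(7) by auto
  then have "(p, map \<rho> xs) \<in> set (newatoms sig j)" using p jin by (auto simp: mem_newatoms)
  moreover have "tv cs \<rho> (Atom p xs) = ((p, map \<rho> xs) \<in> catoms (cs ! j))" by (simp add: j_def)
  moreover have "catoms (cs ! j) = atset sig I j w" using Atom.prems(4) jl by simp
  ultimately show ?case by (simp add: atset_def o_def)
next
  case (Ex v f)
  then obtain e' where e: "e = Suc e'" and qe: "qd f \<le> e'" by (cases e) auto
  let ?n = "length cs"
  have sn: "Suc (?n - 1) = ?n" using Ex.prems(3) by simp
  have ch: "fset (children (last cs)) = (\<lambda>a. tp sig D I e' ?n (w(?n := a))) ` D"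
    using Ex.prems(5) e fset_children_tp[of sig D I e' "?n - 1" w] sn by simp
  have step: "tv (cs @ [tp sig D I e' ?n (w(?n := a))]) (\<rho>(v := ?n)) f = sat D I ((w \<circ> \<rho>)(v := a)) f" for a
  proof -
    have "tv (cs @ [tp sig D I e' ?n (w(?n := a))]) (\<rho>(v := ?n)) f = sat D I (w(?n := a) \<circ> \<rho>(v := ?n)) f"
    proof (rule Ex.IH)
      show "\<forall>j<length (cs @ [tp sig D I e' ?n (w(?n := a))]). catoms ((cs @ [tp sig D I e' ?n (w(?n := a))]) ! j) = atset sig I j (w(?n := a))"
        using Ex.prems(4) by (auto simp: nth_append less_Suc_eq atset_upd catoms_tp)
      show "\<forall>y\<in>fv f. 1 \<le> (\<rho>(v := ?n)) y" using Ex.prems(7) Ex.prems(3) by (auto simp: Suc_le_eq)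
      show "\<forall>y. (\<rho>(v := ?n)) y < length (cs @ [tp sig D I e' ?n (w(?n := a))])"
        using Ex.prems(6) by (simp add: less_SucI)
    qed (use Ex.prems qe in \<open>auto simp del: fun_upd_apply intro: less_SucI\<close>)
    moreover have "w(?n := a) \<circ> \<rho>(v := ?n) = (w \<circ> \<rho>)(v := a)"
      using Ex.prems(6) by (auto simp: fun_eq_iff) (metis less_irrefl)
    ultimately show ?thesis by simp
  qed
  show ?case using ch step by (auto simp: o_def)
next
  case (All v f)
  then obtain e' where e: "e = Suc e'" and qe: "qd f \<le> e'" by (cases e) auto
  let ?n = "length cs"
  have sn: "Suc (?n - 1) = ?n" using All.prems(3) by simp
  have ch: "fset (children (last cs)) = (\<lambda>a. tp sig D I e' ?n (w(?n := a))) ` D"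
    using All.prems(5) e fset_children_tp[of sig D I e' "?n - 1" w] sn by simp
  have step: "tv (cs @ [tp sig D I e' ?n (w(?n := a))]) (\<rho>(v := ?n)) f = sat D I ((w \<circ> \<rho>)(v := a)) f" for a
  proof -
    have "tv (cs @ [tp sig D I e' ?n (w(?n := a))]) (\<rho>(v := ?n)) f = sat D I (w(?n := a) \<circ> \<rho>(v := ?n)) f"
    proof (rule All.IH)
      show "\<forall>j<length (cs @ [tp sig D I e' ?n (w(?n := a))]). catoms ((cs @ [tp sig D I e' ?n (w(?n := a))]) ! j) = atset sig I j (w(?n := a))"
        using All.prems(4) by (auto simp: nth_append less_Suc_eq atset_upd catoms_tp)
      show "\<forall>y\<in>fv f. 1 \<le> (\<rho>(v := ?n)) y" using All.prems(7) All.prems(3) by (auto simp: Suc_le_eq)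
      show "\<forall>y. (\<rho>(v := ?n)) y < length (cs @ [tp sig D I e' ?n (w(?n := a))])"
        using All.prems(6) by (simp add: less_SucI)
    qed (use All.prems qe in \<open>auto simp del: fun_upd_apply intro: less_SucI\<close>)
    moreover have "w(?n := a) \<circ> \<rho>(v := ?n) = (w \<circ> \<rho>)(v := a)"
      using All.prems(6) by (auto simp: fun_eq_iff) (metis less_irrefl)
    ultimately show ?thesis by simp
  qed
  show ?case using ch step by (auto simp: o_def)
next
  case (Disj f g)
  have "tv cs \<rho> f = sat D I (w \<circ> \<rho>) f" by (rule Disj.IH(1)) (use Disj.prems in auto)
  moreover have "tv cs \<rho> g = sat D I (w \<circ> \<rho>) g" by (rule Disj.IH(2)) (use Disj.prems in auto)
  ultimately show ?case by (simp add: o_def)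
next
  case (Conj f g)
  have "tv cs \<rho> f = sat D I (w \<circ> \<rho>) f" by (rule Conj.IH(1)) (use Conj.prems in auto)
  moreover have "tv cs \<rho> g = sat D I (w \<circ> \<rho>) g" by (rule Conj.IH(2)) (use Conj.prems in auto)
  ultimately show ?case by (simp add: o_def)
qed auto



lemma sat_fv: "\<forall>x\<in>fv f. v x = v' x \<Longrightarrow> sat D I v f = sat D I v' f"
proof (induction f arbitrary: v v')
  case (Atom p xs) then show ?case by (simp cong: map_cong)
next
  case (Ex x f)
  have "sat D I (v(x := a)) f = sat D I (v'(x := a)) f" for a by (rule Ex.IH) (use Ex.prems in auto)
  then show ?case by simp
next
  case (All x f)
  have "sat D I (v(x := a)) f = sat D I (v'(x := a)) f" for a by (rule All.IH) (use All.prems in auto)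
  then show ?case by simp
next
  case (Disj f g)
  have "sat D I v f = sat D I v' f" by (rule Disj.IH(1)) (use Disj.prems in auto)
  moreover have "sat D I v g = sat D I v' g" by (rule Disj.IH(2)) (use Disj.prems in auto)
  ultimately show ?case by simp
next
  case (Conj f g)
  have "sat D I v f = sat D I v' f" by (rule Conj.IH(1)) (use Conj.prems in auto)
  moreover have "sat D I v g = sat D I v' g" by (rule Conj.IH(2)) (use Conj.prems in auto)
  ultimately show ?case by simp
qed auto

lemma sat_foldr_Conj: "sat D I w (foldr Conj xs b) = ((\<forall>x\<in>set xs. sat D I w x) \<and> sat D I w b)"
  by (induction xs) auto

lemma sat_foldr_Disj: "sat D I w (foldr Disj xs b) = ((\<exists>x\<in>set xs. sat D I w x) \<or> sat D I w b)"
  by (induction xs) auto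

lemma sat_conj_set: "finite X \<Longrightarrow> sat D I w (conj_set X) = (\<forall>x\<in>X. sat D I w x)"
proof -
  assume "finite X"
  then have "\<exists>xs. set xs = X \<and> distinct xs" by (rule finite_distinct_list)
  then have "set (SOME xs. set xs = X \<and> distinct xs) = X" by (metis (mono_tags, lifting) someI_ex)
  then show ?thesis unfolding conj_set_def sat_foldr_Conj by simp
qed

lemma sat_disj_set: "finite X \<Longrightarrow> sat D I w (disj_set X) = (\<exists>x\<in>X. sat D I w x)"
proof -
  assume "finite X"
  then have "\<exists>xs. set xs = X \<and> distinct xs" by (rule finite_distinct_list)
  then have "set (SOME xs. set xs = X \<and> distinct xs) = X" by (metis (mono_tags, lifting) someI_ex)
  then show ?thesis unfolding disj_set_def sat_foldr_Disj by simp
qed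

lemma sat_atomic_conj: "sat D I w (atomic_conj sig k (atset sig I k w))"
  unfolding atomic_conj_def sat_foldr_Conj by (auto simp: atset_def)

lemma sat_tp: "sat D I w (to_fm sig (tp sig D I e k w) k)"
proof (induction e arbitrary: k w)
  case 0 then show ?case by (simp add: sat_atomic_conj)
next
  case (Suc e)
  let ?F = "\<lambda>a. tp sig D I e (Suc k) (w(Suc k := a))"
  have fs: "fset (children (tp sig D I (Suc e) k w)) = ?F ` D" by (rule fset_children_tp)
  obtain S where tpS: "tp sig D I (Suc e) k w = Node (atset sig I k w) S" by simp
  have S: "fset S = ?F ` D" using fs tpS by simp
  have fin: "finite (fset S)" by simp
  have IH': "sat D I (w(Suc k := a)) (to_fm sig (?F a) (Suc k))" for a by (rule Suc.IH)
  have c1: "sat D I w (conj_set (fset (fimage (\<lambda>c. Ex (Suc k) (to_fm sig c (Suc k))) S)))"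
  proof -
    have fin1: "finite (fset (fimage (\<lambda>c. Ex (Suc k) (to_fm sig c (Suc k))) S))" by simp
    have "\<forall>c\<in>fset S. sat D I w (Ex (Suc k) (to_fm sig c (Suc k)))"
      unfolding S using IH' by auto
    then show ?thesis unfolding sat_conj_set[OF fin1] by simp
  qed
  have c2: "sat D I w (All (Suc k) (disj_set (fset (fimage (\<lambda>c. to_fm sig c (Suc k)) S))))"
  proof -
    have fin1: "finite (fset (fimage (\<lambda>c. to_fm sig c (Suc k)) S))" by simp
    have "\<forall>a\<in>D. \<exists>c\<in>fset S. sat D I (w(Suc k := a)) (to_fm sig c (Suc k))"
      unfolding S using IH' by auto
    then show ?thesis unfolding sat.simps sat_disj_set[OF fin1] by simp
  qed
  show ?case using tpS c1 c2 by (simp add: sat_atomic_conj)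
qed

lemma tp_Delta: "tp sig D I e 0 w \<in> Delta sig e"
proof -
  have a: "atset sig I 0 w = {}" by (simp add: atset_def newatoms0)
  show ?thesis
  proof (cases e)
    case 0 then show ?thesis using a by simp
  next
    case (Suc e')
    have "tp sig D I e 0 w \<in> AC sig 0 e" by (rule tp_AC)
    then show ?thesis using a Suc by auto
  qed
qed

lemma tv_trunc1: "qd \<phi> \<le> n \<Longrightarrow> tv [\<delta>] \<rho> \<phi> = tv [trunc \<delta> n] \<rho> \<phi>"
  by (rule tv_trunc) (auto simp: catoms_trunc nth_Cons split: nat.split)

lemma bold_eq: "bold sig f = indicator {x \<in> Psi sig. x (qd f) \<in> dnf sig f}"
proof
  fix x
  show "bold sig f x = indicator {x \<in> Psi sig. x (qd f) \<in> dnf sig f} x"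
  proof (cases "x \<in> Psi sig")
    case True
    have "bold sig f x = (\<Sum>\<delta>\<in>dnf sig f. if x (qd f) = \<delta> then 1 else 0)"
      unfolding bold_def by (rule sum.cong) (auto simp: cyl_def indicator_def True)
    also have "\<dots> = (if x (qd f) \<in> dnf sig f then 1 else 0)"
      using finite_dnf by (simp add: sum.delta)
    finally show ?thesis using True by (simp add: indicator_def)
  next
    case False
    then show ?thesis unfolding bold_def by (simp add: cyl_def indicator_def)
  qed
qed

lemma cyl_sets:
  assumes "induced_measure sig H \<beta>" "\<delta> \<in> Delta sig d"
  shows "cyl sig d \<delta> \<in> sets \<beta>"
proof -
  have "generate_topology_on (cyls sig) (cyl sig d \<delta>)"
    by (rule generate_topology_on.Basis) (use assms(2) in \<open>auto simp: cyls_def\<close>)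
  then have o: "openin (topology_generated_by (cyls sig)) (cyl sig d \<delta>)"
    by (simp add: openin_topology_generated_by_iff)
  have "cyl sig d \<delta> = cyl sig d \<delta> \<inter> Psi sig" by (auto simp: cyl_def)
  then have "openin (Psi_topology sig) (cyl sig d \<delta>)"
    unfolding Psi_topology_def openin_subtopology using o by blast
  then have "cyl sig d \<delta> \<in> Psi_borel sig" unfolding Psi_borel_def by (auto intro: sigma_sets.Basic)
  then show ?thesis using assms(1) by (simp add: induced_measure_def)
qed

lemma dnfset_sets:
  assumes "induced_measure sig H \<beta>"
  shows "{x \<in> Psi sig. x (qd f) \<in> dnf sig f} \<in> sets \<beta>"
proof -
  have "{x \<in> Psi sig. x (qd f) \<in> dnf sig f} = (\<Union>\<delta>\<in>dnf sig f. cyl sig (qd f) \<delta>)"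
    by (auto simp: cyl_def)
  moreover have "(\<Union>\<delta>\<in>dnf sig f. cyl sig (qd f) \<delta>) \<in> sets \<beta>"
    using finite_dnf cyl_sets[OF assms] by (auto simp: dnf_def)
  ultimately show ?thesis by simp
qed



theorem mainTheorem9:
  fixes sig :: "nat list" and triv :: "cst \<Rightarrow> bool" and H :: "nat \<Rightarrow> cst \<Rightarrow> real"
    and \<beta> :: "(nat \<Rightarrow> cst) measure"
  assumes arity: "\<forall>a\<in>set sig. 1 \<le> a"
    and triv_incons: "\<forall>d. \<forall>\<delta>\<in>Delta sig d. triv \<delta> \<longrightarrow>
        \<not> (\<exists>(D :: 'a set) I v. D \<noteq> {} \<and> range v \<subseteq> D \<and> sat D I v (to_fm sig \<delta> 0))"
    and H: "reasonable sig triv H"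
    and \<beta>: "induced_measure sig H \<beta>"
  shows "(\<forall>\<phi>. sentence sig \<phi> \<longrightarrow> inner_L2 \<beta> (bold sig \<phi>) (bold sig (Neg \<phi>)) = 0)
    \<and> (\<forall>\<phi>1 \<phi>2. sentence sig \<phi>1 \<longrightarrow> sentence sig \<phi>2 \<longrightarrow>
          (AE x in \<beta>. bold sig (Disj \<phi>1 \<phi>2) x = max (bold sig \<phi>1 x) (bold sig \<phi>2 x)))
    \<and> (\<forall>\<phi>1 \<phi>2. sentence sig \<phi>1 \<longrightarrow> sentence sig \<phi>2 \<longrightarrow>
          inner_L2 \<beta> (bold sig \<phi>1) (bold sig \<phi>2) = 0 \<longrightarrow>
          (\<forall>(D :: 'a set) I v. D \<noteq> {} \<longrightarrow> range v \<subseteq> D \<longrightarrow>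
              sat D I v \<phi>1 \<longrightarrow> sat D I v (Neg \<phi>2)))"
proof (intro conjI allI impI)
  have ps: "prob_space \<beta>" and sp: "space \<beta> = Psi sig"
    and mH: "\<forall>d. \<forall>\<delta>\<in>Delta sig d. measure \<beta> (cyl sig d \<delta>) = H d \<delta>"
    using \<beta> by (auto simp: induced_measure_def)
  interpret prob_space \<beta> by (rule ps)
  let ?S = "\<lambda>f. {x \<in> Psi sig. x (qd f) \<in> dnf sig f}"
  have inner: "inner_L2 \<beta> (bold sig f) (bold sig g) = measure \<beta> (?S f \<inter> ?S g)" for f g
  proof -
    have "inner_L2 \<beta> (bold sig f) (bold sig g) = integral\<^sup>L \<beta> (indicator (?S f \<inter> ?S g))"
      unfolding inner_L2_def bold_eq indicator_inter_arith ..
    also have "\<dots> = measure \<beta> (?S f \<inter> ?S g)" using sp by (simp add: Int_absorb2 Int_assoc)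
    finally show ?thesis .
  qed
  {
    fix \<phi>
    have "?S \<phi> \<inter> ?S (Neg \<phi>) = {}" by (auto simp: dnf_def)
    then show "inner_L2 \<beta> (bold sig \<phi>) (bold sig (Neg \<phi>)) = 0" using inner by simp
  }
  {
    fix \<phi>1 \<phi>2
    show "AE x in \<beta>. bold sig (Disj \<phi>1 \<phi>2) x = max (bold sig \<phi>1 x) (bold sig \<phi>2 x)"
    proof (rule AE_I2)
      fix x
      show "bold sig (Disj \<phi>1 \<phi>2) x = max (bold sig \<phi>1 x) (bold sig \<phi>2 x)"
      proof (cases "x \<in> Psi sig")
        case False then show ?thesis by (simp add: bold_eq)
      next
        case True
        let ?E = "max (qd \<phi>1) (qd \<phi>2)"
        have t1: "tv [x ?E] (\<lambda>_. 0) \<phi>1 = tv [x (qd \<phi>1)] (\<lambda>_. 0) \<phi>1"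
          using tv_trunc1[of \<phi>1 "qd \<phi>1"] Psi_trunc[OF True, of "qd \<phi>1" ?E] by simp
        have t2: "tv [x ?E] (\<lambda>_. 0) \<phi>2 = tv [x (qd \<phi>2)] (\<lambda>_. 0) \<phi>2"
          using tv_trunc1[of \<phi>2 "qd \<phi>2"] Psi_trunc[OF True, of "qd \<phi>2" ?E] by simp
        have "x (qd (Disj \<phi>1 \<phi>2)) \<in> dnf sig (Disj \<phi>1 \<phi>2) \<longleftrightarrow>
              x (qd \<phi>1) \<in> dnf sig \<phi>1 \<or> x (qd \<phi>2) \<in> dnf sig \<phi>2"
          using t1 t2 Psi_Delta[OF True] by (auto simp: dnf_def)
        then show ?thesis using True by (auto simp: bold_eq indicator_def)
      qed
    qed
  }
  {
    fix \<phi>1 \<phi>2 and D :: "'a set" and I v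
    assume s1: "sentence sig \<phi>1" and s2: "sentence sig \<phi>2"
      and z: "inner_L2 \<beta> (bold sig \<phi>1) (bold sig \<phi>2) = 0"
      and D: "D \<noteq> {}" and rv: "range v \<subseteq> D" and sat1: "sat D I v \<phi>1"
    show "sat D I v (Neg \<phi>2)"
    proof (rule ccontr)
      assume "\<not> sat D I v (Neg \<phi>2)"
      then have sat2: "sat D I v \<phi>2" by simp
      let ?E = "max (qd \<phi>1) (qd \<phi>2)"
      let ?\<delta> = "tp sig D I ?E 0 v"
      have dE: "?\<delta> \<in> Delta sig ?E" by (rule tp_Delta)
      have tvs: "tv [?\<delta>] (\<lambda>_. 0) f = sat D I v f" if "sentence sig f" "qd f \<le> ?E" for f
      proof -
        have "tv [?\<delta>] (\<lambda>_. 0) f = sat D I (v \<circ> (\<lambda>_. 0)) f"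
          by (rule tv_sat[OF arity]) (use that in \<open>auto simp: sentence_def catoms_tp\<close>)
        also have "\<dots> = sat D I v f" by (rule sat_fv) (use that in \<open>auto simp: sentence_def\<close>)
        finally show ?thesis .
      qed
      have sub: "cyl sig ?E ?\<delta> \<subseteq> ?S \<phi>1 \<inter> ?S \<phi>2"
      proof
        fix x assume x: "x \<in> cyl sig ?E ?\<delta>"
        then have xP: "x \<in> Psi sig" and xE: "x ?E = ?\<delta>" by (auto simp: cyl_def)
        have "x (qd f) \<in> dnf sig f" if "sentence sig f" "qd f \<le> ?E" "sat D I v f" for f
        proof -
          have "x (qd f) = trunc ?\<delta> (qd f)" using Psi_trunc[OF xP that(2)] xE by simp
          moreover have "tv [trunc ?\<delta> (qd f)] (\<lambda>_. 0) f"
            using tv_trunc1[of f "qd f" ?\<delta>] tvs[OF that(1,2)] that(3) by simp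
          ultimately have tvx: "tv [x (qd f)] (\<lambda>_. 0) f" by simp
          have dq: "x (qd f) \<in> Delta sig (qd f)" by (rule Psi_Delta[OF xP])
          show ?thesis unfolding dnf_def using dq tvx by blast
        qed
        then show "x \<in> ?S \<phi>1 \<inter> ?S \<phi>2" using s1 s2 sat1 sat2 xP by auto
      qed
      have "\<not> triv ?\<delta>"
        using triv_incons dE D rv sat_tp[of D I v sig ?E 0] by blast
      then have "H ?E ?\<delta> > 0" using H dE by (auto simp: reasonable_def)
      then have "measure \<beta> (cyl sig ?E ?\<delta>) > 0" using mH dE by simp
      also have "measure \<beta> (cyl sig ?E ?\<delta>) \<le> measure \<beta> (?S \<phi>1 \<inter> ?S \<phi>2)"
        by (rule finite_measure_mono[OF sub]) (use dnfset_sets[OF \<beta>] in auto)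
      finally show False using z inner by simp
    qed
  }
qed

end
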